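(* Every tuple-independent probabilistic database has the finite moments property.
   Context: Fix a countably infinite universe $U$. Facts are expressions $R(u_1,\dots,u_{\mathrm{ar}(R)})$ with $R$ from a finite schema and $u_i\in U$; an instance is a finite set of facts, $|D|$ its number of facts. A probabilistic database (PDB) is a discrete probability space $(\mathbb D,P)$ with $\mathbb D$ a nonempty countable set of instances. A PDB has the finite moments property if $\sum_{D\in\mathbb D}|D|^kP(\{D\})<\infty$ for all $k\in\mathbb N_+$. A PDB $\mathcal I$ is tuple-independent if for all $k$ and all pairwise distinct facts $f_1,\dots,f_k$, $\Pr_{I\sim\mathcal I}(f_1\in I,\dots,f_k\in I)=\prod_i\Pr_{I\sim\mathcal I}(f_i\in I)$. *)

theory Defs
  imports "HOL-Probability.Probability"
begin

type_synonym ('r, 'u) fact = "'r \<times> 'u list"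

definition is_fact :: "('r \<Rightarrow> nat) \<Rightarrow> ('r, 'u) fact \<Rightarrow> bool" where
  "is_fact ar f \<longleftrightarrow> length (snd f) = ar (fst f)"

definition is_instance :: "('r \<Rightarrow> nat) \<Rightarrow> ('r, 'u) fact set \<Rightarrow> bool" where
  "is_instance ar D \<longleftrightarrow> finite D \<and> (\<forall>f\<in>D. is_fact ar f)"

text \<open>A PDB is a discrete probability distribution (pmf) whose sample space consists of
  instances; its support is countable automatically.\<close>

definition is_PDB :: "('r \<Rightarrow> nat) \<Rightarrow> ('r, 'u) fact set pmf \<Rightarrow> bool" where
  "is_PDB ar P \<longleftrightarrow> (\<forall>D\<in>set_pmf P. is_instance ar D)"

definition finite_moments :: "('r, 'u) fact set pmf \<Rightarrow> bool" where
  "finite_moments P \<longleftrightarrow>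
     (\<forall>k::nat. k \<ge> 1 \<longrightarrow> (\<lambda>D. real (card D) ^ k * pmf P D) summable_on set_pmf P)"

definition tuple_independent :: "('r \<Rightarrow> nat) \<Rightarrow> ('r, 'u) fact set pmf \<Rightarrow> bool" where
  "tuple_independent ar P \<longleftrightarrow>
     (\<forall>fs::('r, 'u) fact list. distinct fs \<longrightarrow> (\<forall>f\<in>set fs. is_fact ar f) \<longrightarrow>
        measure_pmf.prob P {I. \<forall>f\<in>set fs. f \<in> I}
          = (\<Prod>f\<leftarrow>fs. measure_pmf.prob P {I. f \<in> I}))"

end

theory Submission
  imports Defs
begin

lemma Q_prod:
  assumes ti: "tuple_independent ar P" and A: "finite A" "A \<subseteq> {f. is_fact ar f}"
  shows "measure_pmf.prob P {I. A \<subseteq> I} = (\<Prod>f\<in>A. measure_pmf.prob P {I. f \<in> I})"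
proof -
  obtain fs where fs: "set fs = A" "distinct fs" using finite_distinct_list[OF A(1)] by blast
  have "measure_pmf.prob P {I. \<forall>f\<in>set fs. f \<in> I} = (\<Prod>f\<leftarrow>fs. measure_pmf.prob P {I. f \<in> I})"
    using ti fs A(2) unfolding tuple_independent_def by auto
  moreover have "{I. \<forall>f\<in>set fs. f \<in> I} = {I. A \<subseteq> I}" using fs by auto
  moreover have "(\<Prod>f\<leftarrow>fs. measure_pmf.prob P {I. f \<in> I}) = (\<Prod>f\<in>A. measure_pmf.prob P {I. f \<in> I})"
    using fs by (metis prod.distinct_set_conv_list)
  ultimately show ?thesis by simp
qed

lemma card_sum: "finite S \<Longrightarrow> real (card (I \<inter> S)) = (\<Sum>f\<in>S. indicator {I. f \<in> I} I)"
proof -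
  assume "finite S"
  have "real (card (I \<inter> S)) = (\<Sum>f\<in>S \<inter> I. 1)" by (simp add: Int_commute)
  also have "\<dots> = (\<Sum>f\<in>S. if f \<in> I then 1 else 0)"
    using \<open>finite S\<close> by (simp add: sum.If_cases Int_def)
  finally show ?thesis by (simp add: indicator_def of_bool_def)
qed

lemma integrable_bdd:
  fixes g :: "('r, 'u) fact set \<Rightarrow> real"
  assumes "\<And>I. \<bar>g I\<bar> \<le> B"
  shows "integrable (measure_pmf P) g"
  by (rule measure_pmf.integrable_const_bound[where B=B]) (use assms in auto)

lemma moment_bound:
  fixes P :: "('r, 'u) fact set pmf"
  assumes ti: "tuple_independent ar P" and S: "finite S" "S \<subseteq> {f. is_fact ar f}"
  shows "finite A \<Longrightarrow> A \<subseteq> S \<Longrightarrow>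
    (\<integral>I. indicator {I. A \<subseteq> I} I * real (card (I \<inter> S)) ^ k \<partial>measure_pmf P)
      \<le> measure_pmf.prob P {I. A \<subseteq> I} *
         (\<Prod>i<k. (\<Sum>f\<in>S. measure_pmf.prob P {I. f \<in> I}) + real (card A) + real i)"
proof (induction k arbitrary: A)
  case 0
  then show ?case by simp
next
  case (Suc k)
  define s where "s = (\<Sum>f\<in>S. measure_pmf.prob P {I. f \<in> I})"
  define Q where "Q = (\<lambda>A. measure_pmf.prob P {I. A \<subseteq> I})"
  define C where "C = (\<Prod>i<k. s + real (card A + 1) + real i)"
  have s0: "s \<ge> 0" unfolding s_def by (simp add: sum_nonneg)
  have C0: "C \<ge> 0" unfolding C_def using s0 by (intro prod_nonneg) auto
  have eq: "indicator {I. A \<subseteq> I} I * real (card (I \<inter> S)) ^ Suc k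
      = (\<Sum>f\<in>S. indicator {I. insert f A \<subseteq> I} I * real (card (I \<inter> S)) ^ k)" for I
    by (simp add: card_sum[OF S(1)] sum_distrib_left sum_distrib_right indicator_def mult.commute mult.left_commute)
  have intg: "integrable (measure_pmf P) (\<lambda>I. indicator {I. B \<subseteq> I} I * real (card (I \<inter> S)) ^ k)" for B
  proof (rule integrable_bdd[where B="real (card S) ^ k"])
    fix I
    have "card (I \<inter> S) \<le> card S" using S(1) by (simp add: card_mono)
    then show "\<bar>indicator {I. B \<subseteq> I} I * real (card (I \<inter> S)) ^ k\<bar> \<le> real (card S) ^ k"
      by (auto simp: indicator_def power_mono)
  qed
  have "(\<integral>I. indicator {I. A \<subseteq> I} I * real (card (I \<inter> S)) ^ Suc k \<partial>measure_pmf P)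
      = (\<Sum>f\<in>S. (\<integral>I. indicator {I. insert f A \<subseteq> I} I * real (card (I \<inter> S)) ^ k \<partial>measure_pmf P))"
    unfolding eq by (intro Bochner_Integration.integral_sum intg)
  also have "\<dots> \<le> (\<Sum>f\<in>S. Q (insert f A) * C)"
  proof (rule sum_mono)
    fix f assume f: "f \<in> S"
    have "(\<integral>I. indicator {I. insert f A \<subseteq> I} I * real (card (I \<inter> S)) ^ k \<partial>measure_pmf P)
        \<le> Q (insert f A) * (\<Prod>i<k. s + real (card (insert f A)) + real i)"
    proof -
      have fin: "finite (insert f A)" using Suc.prems by simp
      have sub: "insert f A \<subseteq> S" using Suc.prems f by simp
      show ?thesis using Suc.IH[OF fin sub] unfolding Q_def s_def .
    qed
    also have "\<dots> \<le> Q (insert f A) * C"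
      unfolding C_def
    proof (intro mult_left_mono prod_mono conjI)
      fix i assume "i \<in> {..<k}"
      have "card (insert f A) \<le> card A + 1" by (simp add: card_insert_le_m1 card_insert_if)
      then show "s + real (card (insert f A)) + real i \<le> s + real (card A + 1) + real i" by linarith
      show "0 \<le> s + real (card (insert f A)) + real i" using s0 by simp
    qed (simp add: Q_def)
    finally show "(\<integral>I. indicator {I. insert f A \<subseteq> I} I * real (card (I \<inter> S)) ^ k \<partial>measure_pmf P)
        \<le> Q (insert f A) * C" .
  qed
  also have "\<dots> = C * (\<Sum>f\<in>S. Q (insert f A))" by (simp add: sum_distrib_left mult.commute)
  also have "\<dots> \<le> C * (\<Sum>f\<in>S. Q A * measure_pmf.prob P {I. f \<in> I} + (if f \<in> A then Q A else 0))"
  proof (intro mult_left_mono sum_mono C0)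
    fix f assume f: "f \<in> S"
    show "Q (insert f A) \<le> Q A * measure_pmf.prob P {I. f \<in> I} + (if f \<in> A then Q A else 0)"
    proof (cases "f \<in> A")
      case True
      then show ?thesis by (simp add: insert_absorb Q_def)
    next
      case False
      have "Q (insert f A) = (\<Prod>g\<in>insert f A. measure_pmf.prob P {I. g \<in> I})"
        unfolding Q_def using Suc.prems f S(2) by (intro Q_prod[OF ti]) auto
      also have "\<dots> = measure_pmf.prob P {I. f \<in> I} * Q A"
        unfolding Q_def using Suc.prems False S(2) by (simp add: Q_prod[OF ti])
      finally show ?thesis using False by simp
    qed
  qed
  also have "(\<Sum>f\<in>S. Q A * measure_pmf.prob P {I. f \<in> I} + (if f \<in> A then Q A else 0)) = Q A * (s + real (card A))"
  proof -
    have "(\<Sum>f\<in>S. (if f \<in> A then Q A else 0)) = (\<Sum>f\<in>S \<inter> A. Q A)"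
      using S(1) by (simp add: sum.If_cases)
    also have "\<dots> = Q A * real (card A)" using Suc.prems by (simp add: Int_absorb1)
    finally show ?thesis by (simp add: sum.distrib s_def sum_distrib_left algebra_simps)
  qed
  also have "C * (Q A * (s + real (card A))) = Q A * (\<Prod>i<Suc k. s + real (card A) + real i)"
    unfolding C_def prod.lessThan_Suc_shift by (simp add: algebra_simps)
  finally show ?case unfolding Q_def s_def .
qed


lemma sum_bound:
  fixes P :: "('r, 'u) fact set pmf"
  assumes ti: "tuple_independent ar P" and pdb: "is_PDB ar P"
  shows "\<exists>B. \<forall>S. finite S \<and> S \<subseteq> {f. is_fact ar f} \<longrightarrow>
           (\<Sum>f\<in>S. measure_pmf.prob P {I. f \<in> I}) \<le> B"
proof (rule ccontr)
  assume nb: "\<not> ?thesis"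
  have "(\<lambda>n. measure_pmf.prob P {I. card I \<le> n}) \<longlonglongrightarrow> measure_pmf.prob P (\<Union>n. {I. card I \<le> n})"
    by (rule measure_pmf.finite_Lim_measure_incseq) (auto simp: incseq_def)
  moreover have "(\<Union>n. {I::('r, 'u) fact set. card I \<le> n}) = UNIV" by auto
  ultimately have lim: "(\<lambda>n. measure_pmf.prob P {I. card I \<le> n}) \<longlonglongrightarrow> 1" by simp
  have "eventually (\<lambda>n. measure_pmf.prob P {I. card I \<le> n} > 1/2) sequentially"
    using order_tendstoD(1)[OF lim, of "1/2"] by simp
  then obtain n where n: "measure_pmf.prob P {I. card I \<le> n} > 1/2"
    by (auto simp: eventually_sequentially)
  obtain S where S: "finite S" "S \<subseteq> {f. is_fact ar f}"
    and Sbig: "(\<Sum>f\<in>S. measure_pmf.prob P {I. f \<in> I}) > max (2 * real n) 8"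
    using nb by (meson not_le)
  define s where "s = (\<Sum>f\<in>S. measure_pmf.prob P {I. f \<in> I})"
  define X where "X = (\<lambda>I::('r, 'u) fact set. real (card (I \<inter> S)))"
  have s8: "s > 8" and sn: "s \<ge> 2 * real n" using Sbig unfolding s_def by auto
  have Xb: "\<bar>X I\<bar> \<le> real (card S)" for I
    unfolding X_def using S(1) by (simp add: card_mono)
  have intX: "integrable (measure_pmf P) X" by (rule integrable_bdd[OF Xb])
  have intX2: "integrable (measure_pmf P) (\<lambda>I. X I ^ 2)"
  proof (rule integrable_bdd[where B="real (card S) ^ 2"])
    fix I show "\<bar>X I ^ 2\<bar> \<le> real (card S) ^ 2"
      using Xb[of I] unfolding X_def by (simp add: power_mono)
  qed
  have EX: "(\<integral>I. X I \<partial>measure_pmf P) = s"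
  proof -
    have "(\<integral>I. X I \<partial>measure_pmf P) = (\<integral>I. (\<Sum>f\<in>S. indicator {I. f \<in> I} I) \<partial>measure_pmf P)"
      unfolding X_def using card_sum[OF S(1)] by simp
    also have "\<dots> = (\<Sum>f\<in>S. (\<integral>I. indicator {I. f \<in> I} I \<partial>measure_pmf P))"
      by (intro Bochner_Integration.integral_sum integrable_bdd[where B=1]) (auto simp: indicator_def)
    also have "\<dots> = s" unfolding s_def by simp
    finally show ?thesis .
  qed
  have EX2: "(\<integral>I. X I ^ 2 \<partial>measure_pmf P) \<le> s * (s + 1)"
    using moment_bound[OF ti S, of "{}" 2] unfolding X_def s_def
    by (simp add: numeral_2_eq_2 lessThan_Suc mult.commute)
  have cheb: "indicator {I. X I \<le> s / 2} I * (s / 2) ^ 2 \<le> X I ^ 2 - 2 * s * X I + s ^ 2" for I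
  proof (cases "X I \<le> s / 2")
    case True
    have "(s / 2) ^ 2 \<le> (s - X I) ^ 2"
      using True s8 by (intro power_mono) auto
    then show ?thesis using True by (simp add: power2_diff algebra_simps)
  next
    case False
    have "0 \<le> (X I - s) ^ 2" by simp
    then show ?thesis using False by (simp add: power2_diff algebra_simps)
  qed
  have "measure_pmf.prob P {I. X I \<le> s / 2} * (s / 2) ^ 2
      = (\<integral>I. indicator {I. X I \<le> s / 2} I * (s / 2) ^ 2 \<partial>measure_pmf P)"
    by simp
  also have "\<dots> \<le> (\<integral>I. X I ^ 2 - 2 * s * X I + s ^ 2 \<partial>measure_pmf P)"
  proof (intro integral_mono cheb)
    show "integrable (measure_pmf P) (\<lambda>I. indicator {I. X I \<le> s / 2} I * (s / 2) ^ 2)"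
      by (rule integrable_bdd[where B="(s/2)^2"]) (auto simp: indicator_def)
    show "integrable (measure_pmf P) (\<lambda>I. X I ^ 2 - 2 * s * X I + s ^ 2)"
      by (intro Bochner_Integration.integrable_add Bochner_Integration.integrable_diff
          integrable_mult_right intX intX2 measure_pmf.integrable_const)
  qed
  also have "\<dots> = (\<integral>I. X I ^ 2 - 2 * s * X I \<partial>measure_pmf P) + (\<integral>I. s ^ 2 \<partial>measure_pmf P)"
    by (intro Bochner_Integration.integral_add Bochner_Integration.integrable_diff
          integrable_mult_right intX intX2 measure_pmf.integrable_const)
  also have "(\<integral>I. X I ^ 2 - 2 * s * X I \<partial>measure_pmf P) = (\<integral>I. X I ^ 2 \<partial>measure_pmf P) - (\<integral>I. 2 * s * X I \<partial>measure_pmf P)"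
    by (intro Bochner_Integration.integral_diff integrable_mult_right intX intX2)
  also have "(\<integral>I. 2 * s * X I \<partial>measure_pmf P) = 2 * s * (\<integral>I. X I \<partial>measure_pmf P)"
    by (rule integral_mult_right_zero)
  also have "(\<integral>I. s ^ 2 \<partial>measure_pmf P) = s ^ 2" by simp
  also have "(\<integral>I. X I ^ 2 \<partial>measure_pmf P) - 2 * s * (\<integral>I. X I \<partial>measure_pmf P) + s ^ 2 \<le> s"
    using EX EX2 by (simp add: power2_eq_square algebra_simps)
  finally have pr: "measure_pmf.prob P {I. X I \<le> s / 2} * (s / 2) ^ 2 \<le> s" .
  have "measure_pmf.prob P {I. card I \<le> n} \<le> measure_pmf.prob P {I. X I \<le> s / 2}"
  proof (rule measure_pmf.finite_measure_mono_AE)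
    show "AE x in measure_pmf P. x \<in> {I. card I \<le> n} \<longrightarrow> x \<in> {I. X I \<le> s / 2}"
    proof (subst AE_measure_pmf_iff, intro ballI impI)
      fix I assume I: "I \<in> set_pmf P" "I \<in> {I. card I \<le> n}"
      have "finite I" using pdb I(1) unfolding is_PDB_def is_instance_def by auto
      then have "card (I \<inter> S) \<le> card I" by (simp add: card_mono)
      then show "I \<in> {I. X I \<le> s / 2}" using I(2) sn unfolding X_def by auto
    qed
  qed simp
  with n have half: "1/2 < measure_pmf.prob P {I. X I \<le> s / 2}" by simp
  define q where "q = measure_pmf.prob P {I. X I \<le> s / 2}"
  have q: "1/2 < q" unfolding q_def by (rule half)
  have pr': "q * (s * s) \<le> 4 * s" using pr unfolding q_def[symmetric]
    by (simp add: power2_eq_square field_simps)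
  have "q * s \<le> 4"
  proof -
    have "(q * s) * s \<le> 4 * s" using pr' by (simp add: mult.assoc)
    then show ?thesis using s8 by (simp add: mult_le_cancel_right)
  qed
  moreover have "s / 2 < q * s" using q s8 by (simp add: mult_strict_right_mono)
  ultimately show False using s8 by linarith
qed

theorem proposition3p3:
  fixes ar :: "'r::finite \<Rightarrow> nat"
    and P :: "('r, 'u::countable) fact set pmf"
  assumes "infinite (UNIV :: 'u set)"
    and "is_PDB ar P"
    and "tuple_independent ar P"
  shows "finite_moments P"
proof -
  note pdb = assms(2) and ti = assms(3)
  obtain B where B: "\<And>S. finite S \<Longrightarrow> S \<subseteq> {f. is_fact ar f} \<Longrightarrow>
       (\<Sum>f\<in>S. measure_pmf.prob P {I. f \<in> I}) \<le> B"
    using sum_bound[OF ti pdb] by blast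
  have B0: "B \<ge> 0" using B[of "{}"] by simp
  have fin: "finite D" "D \<subseteq> {f. is_fact ar f}" if "D \<in> set_pmf P" for D
    using pdb that unfolding is_PDB_def is_instance_def by auto
  show ?thesis unfolding finite_moments_def
  proof (intro allI impI)
    fix k :: nat
    show "(\<lambda>D. real (card D) ^ k * pmf P D) summable_on set_pmf P"
    proof (rule nonneg_bdd_above_summable_on)
      show "bdd_above (sum (\<lambda>D. real (card D) ^ k * pmf P D) ` {F. F \<subseteq> set_pmf P \<and> finite F})"
      proof (rule bdd_aboveI2)
        fix T assume T: "T \<in> {F. F \<subseteq> set_pmf P \<and> finite F}"
        define S where "S = \<Union>T"
        have S: "finite S" "S \<subseteq> {f. is_fact ar f}"
          using T fin unfolding S_def by (auto intro!: finite_Union)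
        have "(\<Sum>D\<in>T. real (card D) ^ k * pmf P D) = (\<Sum>D\<in>T. real (card (D \<inter> S)) ^ k * pmf P D)"
        proof (rule sum.cong)
          fix D assume "D \<in> T" then have "D \<inter> S = D" unfolding S_def by auto
          then show "real (card D) ^ k * pmf P D = real (card (D \<inter> S)) ^ k * pmf P D" by simp
        qed simp
        also have "\<dots> = (\<integral>D. indicator T D * real (card (D \<inter> S)) ^ k \<partial>measure_pmf P)"
          using T by (subst integral_measure_pmf_real[where A=T]) (auto simp: indicator_def)
        also have "\<dots> \<le> (\<integral>D. indicator {D. {} \<subseteq> D} D * real (card (D \<inter> S)) ^ k \<partial>measure_pmf P)"
        proof (rule integral_mono)
          have b: "\<bar>real (card (D \<inter> S)) ^ k\<bar> \<le> real (card S) ^ k" for D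
            using S(1) by (simp add: card_mono power_mono)
          show "integrable (measure_pmf P) (\<lambda>D. indicator T D * real (card (D \<inter> S)) ^ k)"
            by (rule integrable_bdd[where B="real (card S) ^ k"]) (use b in \<open>auto simp: indicator_def\<close>)
          show "integrable (measure_pmf P) (\<lambda>D. indicator {D. {} \<subseteq> D} D * real (card (D \<inter> S)) ^ k)"
            by (rule integrable_bdd[where B="real (card S) ^ k"]) (use b in \<open>auto simp: indicator_def\<close>)
        qed (auto simp: indicator_def)
        also have "\<dots> \<le> (\<Prod>i<k. (\<Sum>f\<in>S. measure_pmf.prob P {I. f \<in> I}) + real i)"
          using moment_bound[OF ti S, of "{}" k] by simp
        also have "\<dots> \<le> (\<Prod>i<k. B + real i)"
          using B[OF S] by (intro prod_mono) (auto simp: sum_nonneg)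
        finally show "(\<Sum>D\<in>T. real (card D) ^ k * pmf P D) \<le> (\<Prod>i<k. B + real i)" .
      qed
    qed simp
  qed
qed

end
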